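(* Let $a,b,\lambda,N\in\mathbb N$ and $$M_N(a,b,\lambda)=\int_{[-1/2,1/2]^N}\prod_{l=1}^N e^{\pi i\theta_l(a-b)}\bigl|1+e^{2\pi i\theta_l}\bigr|^{a+b}\prod_{1\le k<l\le N}\bigl|e^{2\pi i\theta_k}-e^{2\pi i\theta_l}\bigr|^{2\lambda}\,d\theta.$$ Then $$M_N(a,b,\lambda)=\sum_{\substack{I_{kl}=-\lambda\\ 1\le k<l\le N}}^{\lambda}(-1)^{\sum_{k<l}I_{kl}}\prod_{1\le k<l\le N}\binom{2\lambda}{\lambda+I_{kl}}\prod_{k=1}^N\binom{a+b}{a+\sum_{l\ne k}I_{kl}}.$$
   Context: The sum runs over all families of integers $I_{kl}\in\{-\lambda,\dots,\lambda\}$, one for each pair $1\le k<l\le N$, with the convention $I_{kl}:=-I_{lk}$ for $k>l$. Binomial coefficients $\binom{r}{j}$ with $j<0$ or $j>r$ are zero. *)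

theory Defs
  imports "HOL-Analysis.Analysis" "HOL-Probability.Probability"
begin

definition binom_int :: "nat \<Rightarrow> int \<Rightarrow> int" where
  "binom_int r j = (if 0 \<le> j \<and> j \<le> int r then int (r choose nat j) else 0)"

text \<open>Index pairs k<l with k,l in {0..<N} (0-based version of 1..N).\<close>
definition pairs :: "nat \<Rightarrow> (nat \<times> nat) set" where
  "pairs N = {(k, l). k < l \<and> l < N}"

definition Iext :: "(nat \<times> nat \<Rightarrow> int) \<Rightarrow> nat \<Rightarrow> nat \<Rightarrow> int" where
  "Iext I k l = (if k < l then I (k, l) else if l < k then - I (l, k) else 0)"

definition M :: "nat \<Rightarrow> nat \<Rightarrow> nat \<Rightarrow> nat \<Rightarrow> complex" where
  "M N a b lam =
     (\<integral>\<theta>. indicator (PiE {..<N} (\<lambda>_. {-1/2..1/2::real})) \<theta> *\<^sub>R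
        ((\<Prod>l<N. cis (pi * \<theta> l * (real a - real b)) *
            of_real (cmod (1 + cis (2 * pi * \<theta> l)) ^ (a + b))) *
         (\<Prod>(k, l)\<in>pairs N.
            of_real (cmod (cis (2 * pi * \<theta> k) - cis (2 * pi * \<theta> l)) ^ (2 * lam))))
      \<partial>(PiM {..<N} (\<lambda>_. lborel)))"

end

theory Submission imports Defs begin

lemma cis_int_integral_HK:
  fixes n :: int
  shows "((\<lambda>t. cis (2*pi* of_int n*t)) has_integral (if n = 0 then 1 else 0)) {-1/2..1/2::real}"
proof (cases "n = 0")
  case True
  then show ?thesis using has_integral_const_real[of "1::complex" "-1/2" "1/2"] by simp
next
  case False
  define c where "c = 2*pi* of_int n"
  have c0: "c \<noteq> 0" using False by (simp add: c_def)
  define f where "f t = inverse (\<i> * of_real c) * cis (c*t)" for t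
  have d: "(f has_vector_derivative cis (c*t)) (at t within S)" for t S
  proof -
    have "((\<lambda>t. cis (c*t)) has_derivative (\<lambda>h. (c*h) *\<^sub>R (\<i> * cis (c*t)))) (at t within S)"
      by (auto intro!: derivative_eq_intros)
    then have "((\<lambda>t. inverse (\<i> * of_real c) * cis (c*t)) has_derivative (\<lambda>h. inverse (\<i> * of_real c) * ((c*h) *\<^sub>R (\<i> * cis (c*t))))) (at t within S)"
      by (rule has_derivative_mult_right)
    moreover have "(\<lambda>h. inverse (\<i> * of_real c) * ((c*h) *\<^sub>R (\<i> * cis (c*t)))) = (\<lambda>h. h *\<^sub>R cis (c*t))"
      using c0 by (auto simp: scaleR_conv_of_real field_simps)
    ultimately show ?thesis unfolding f_def has_vector_derivative_def by simp
  qed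
  have "((\<lambda>t. cis (c*t)) has_integral (f (1/2) - f (-1/2))) {-1/2..1/2}"
    by (rule fundamental_theorem_of_calculus) (auto intro: d)
  moreover have "f (1/2) = f (-1/2)"
  proof -
    have "cis (c*(1/2)) = cis (c*(-1/2))"
    proof -
      have "c*(1/2) = c*(-1/2) + 2*pi* of_int n" by (simp add: c_def algebra_simps)
      then have "cis (c*(1/2)) = cis (c*(-1/2)) * cis (2*pi* of_int n)"
        by (metis cis_mult)
      also have "cis (2*pi* of_int n) = 1" by (rule cis_multiple_2pi) simp
      finally show ?thesis by simp
    qed
    then show ?thesis by (simp add: f_def)
  qed
  ultimately show ?thesis using False by (simp add: c_def)
qed

lemma one_plus_cis:
  "1 + cis (2 * pi * t) = cis (pi * t) * complex_of_real (2 * cos (pi * t))"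
proof -
  have "cis (pi * t) * complex_of_real (2 * cos (pi * t)) = cis (pi * t) * (cis (pi * t) + cis (- (pi * t)))"
    by (simp add: complex_eq_iff)
  also have "\<dots> = cis (2 * pi * t) + 1"
    by (simp add: distrib_left cis_mult mult.assoc)
  finally show ?thesis by simp
qed

lemma h_expand:
  assumes "t \<in> {-1/2..1/2::real}"
  shows "cis (pi * t * (real a - real b)) * complex_of_real (cmod (1 + cis (2 * pi * t)) ^ (a + b))
       = (\<Sum>j\<le>a+b. of_nat ((a+b) choose j) * cis (2 * pi * of_int (int j - int b) * t))"
proof -
  have c: "0 \<le> cos (pi * t)"
  proof -
    have "pi * (-1/2) \<le> pi * t" "pi * t \<le> pi * (1/2)"
      using assms by (intro mult_left_mono; simp)+
    then show ?thesis by (intro cos_ge_zero) auto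
  qed
  have n: "cmod (1 + cis (2 * pi * t)) = 2 * cos (pi * t)"
    using c by (simp add: one_plus_cis norm_mult)
  have "complex_of_real (cmod (1 + cis (2 * pi * t)) ^ (a + b)) = (cis (- (pi * t)) * (1 + cis (2 * pi * t))) ^ (a + b)"
    unfolding n by (simp add: one_plus_cis cis_mult flip: mult.assoc)
  also have "\<dots> = cis (- (pi * t)) ^ (a + b) * (\<Sum>j\<le>a+b. of_nat ((a+b) choose j) * cis (2 * pi * t) ^ j)"
    by (simp add: power_mult_distrib binomial_ring add.commute[of 1])
  finally have "cis (pi * t * (real a - real b)) * complex_of_real (cmod (1 + cis (2 * pi * t)) ^ (a + b))
     = (\<Sum>j\<le>a+b. of_nat ((a+b) choose j) * (cis (pi * t * (real a - real b)) * cis (- (pi * t)) ^ (a + b) * cis (2 * pi * t) ^ j))"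
    by (simp add: sum_distrib_left algebra_simps)
  also have "\<dots> = (\<Sum>j\<le>a+b. of_nat ((a+b) choose j) * cis (2 * pi * of_int (int j - int b) * t))"
  proof (rule sum.cong[OF refl])
    fix j assume "j \<in> {..a+b}"
    have "cis (pi * t * (real a - real b)) * cis (- (pi * t)) ^ (a + b) * cis (2 * pi * t) ^ j
      = cis (pi * t * (real a - real b) + real (a+b) * (- (pi * t)) + real j * (2 * pi * t))"
      by (simp only: Complex.DeMoivre cis_mult)
    also have "pi * t * (real a - real b) + real (a+b) * (- (pi * t)) + real j * (2 * pi * t) = 2 * pi * of_int (int j - int b) * t"
      by (simp add: algebra_simps)
    finally show "of_nat ((a+b) choose j) * (cis (pi * t * (real a - real b)) * cis (- (pi * t)) ^ (a + b) * cis (2 * pi * t) ^ j)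
      = of_nat ((a+b) choose j) * cis (2 * pi * of_int (int j - int b) * t)" by simp
  qed
  finally show ?thesis .
qed

lemma neg1_pow_abs: "(-1::'a::ring_1) ^ nat \<bar>i\<bar> = (if even i then 1 else -1)"
proof -
  have "even (nat \<bar>i\<bar>) \<longleftrightarrow> even i" by (simp add: even_nat_iff)
  then show ?thesis by (simp add: minus_one_power_iff)
qed

lemma reidx: "(\<Sum>k\<le>2*lam. H (int k - int lam)) = (\<Sum>i\<in>{-int lam..int lam}. H i)"
  by (rule sum.reindex_bij_witness[of _ "\<lambda>i. nat (i + int lam)" "\<lambda>k. int k - int lam"]) auto

lemma pair_expand:
  "complex_of_real (cmod (cis x - cis y) ^ (2*lam)) =
   (\<Sum>i\<in>{-int lam..int lam}. of_int ((-1) ^ nat \<bar>i\<bar> * binom_int (2*lam) (int lam + i)) * cis (of_int i * (x - y)))"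
proof -
  define d where "d = x - y"
  define u where "u = cis (d/2)"
  have e1: "cis x - cis y = cis y * u * (u - cnj u)"
    by (simp add: u_def d_def cis_cnj algebra_simps cis_mult)
  have e2: "u - cnj u = \<i> * complex_of_real (2 * sin (d/2))"
    by (simp add: u_def complex_eq_iff)
  have n1: "cmod (cis x - cis y) = \<bar>2 * sin (d/2)\<bar>"
    unfolding e1 e2 by (simp add: norm_mult u_def)
  have "complex_of_real (cmod (cis x - cis y) ^ (2*lam)) = (complex_of_real ((2 * sin (d/2))^2)) ^ lam"
    unfolding n1 by (simp add: power_mult power_even_abs)
  also have "complex_of_real ((2 * sin (d/2))^2) = - ((u - cnj u)^2)"
    unfolding e2 by (simp add: power_mult_distrib)
  also have "(- ((u - cnj u)^2)) ^ lam = (-1)^lam * (u + (- cnj u)) ^ (2*lam)"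
    by (simp add: power_mult power_mult_distrib[symmetric])
  also have "\<dots> = (\<Sum>k\<le>2*lam. (-1)^lam * (of_nat (2*lam choose k) * u ^ k * (- cnj u) ^ (2*lam - k)))"
    using binomial_ring[of u "- cnj u" "2*lam"] by (simp only: sum_distrib_left)
  also have "\<dots> = (\<Sum>k\<le>2*lam. of_int ((-1) ^ nat \<bar>int k - int lam\<bar> * binom_int (2*lam) (int lam + (int k - int lam))) * cis (of_int (int k - int lam) * (x - y)))"
  proof (rule sum.cong[OF refl])
    fix k assume k: "k \<in> {..2*lam}"
    have "u ^ k * (- cnj u) ^ (2*lam - k) = (-1) ^ (2*lam - k) * (u ^ k * cnj u ^ (2*lam - k))"
      unfolding power_minus[of "cnj u"] by (rule mult.left_commute)
    also have "u ^ k * cnj u ^ (2*lam - k) = cis (real k * (d/2) + real (2*lam - k) * (- (d/2)))"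
      by (simp only: u_def cis_cnj Complex.DeMoivre cis_mult)
    also have "real k * (d/2) + real (2*lam - k) * (- (d/2)) = of_int (int k - int lam) * (x - y)"
      using k by (simp add: d_def of_nat_diff algebra_simps add_divide_distrib diff_divide_distrib)
    finally have A: "u ^ k * (- cnj u) ^ (2*lam - k) = (-1) ^ (2*lam - k) * cis (of_int (int k - int lam) * (x - y))" .
    have B: "binom_int (2*lam) (int lam + (int k - int lam)) = int (2*lam choose k)"
      using k by (simp add: binom_int_def)
    have C: "(-1::complex)^lam * (-1) ^ (2*lam - k) = of_int ((-1) ^ nat \<bar>int k - int lam\<bar>)"
    proof -
      have "even (lam + (2*lam - k)) \<longleftrightarrow> even (int k - int lam)" using k by (simp add: even_add even_diff_nat) presburger
      then show ?thesis using k by (simp add: neg1_pow_abs minus_one_power_iff flip: power_add)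
    qed
    show "(-1)^lam * (of_nat (2*lam choose k) * u ^ k * (- cnj u) ^ (2*lam - k)) =
      of_int ((-1) ^ nat \<bar>int k - int lam\<bar> * binom_int (2*lam) (int lam + (int k - int lam))) * cis (of_int (int k - int lam) * (x - y))"
    proof -
      have "(-1)^lam * (of_nat (2*lam choose k) * u ^ k * (- cnj u) ^ (2*lam - k)) =
        (-1)^lam * (of_nat (2*lam choose k) * ((-1) ^ (2*lam - k) * cis (of_int (int k - int lam) * (x - y))))"
        by (simp only: mult.assoc A)
      also have "\<dots> = ((-1::complex)^lam * (-1) ^ (2*lam - k)) * (of_nat (2*lam choose k) * cis (of_int (int k - int lam) * (x - y)))"
        by (simp only: ac_simps)
      also have "\<dots> = of_int ((-1) ^ nat \<bar>int k - int lam\<bar> * binom_int (2*lam) (int lam + (int k - int lam))) * cis (of_int (int k - int lam) * (x - y))"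
        unfolding C B by simp
      finally show ?thesis .
    qed
  qed
  also have "\<dots> = (\<Sum>i\<in>{-int lam..int lam}. of_int ((-1) ^ nat \<bar>i\<bar> * binom_int (2*lam) (int lam + i)) * cis (of_int i * (x - y)))"
    by (rule reidx)
  finally show ?thesis .
qed

definition hh :: "nat \<Rightarrow> nat \<Rightarrow> real \<Rightarrow> complex" where
  "hh a b t = cis (pi * t * (real a - real b)) * complex_of_real (cmod (1 + cis (2 * pi * t)) ^ (a + b))"

lemma binom_int_sym: "binom_int n j = binom_int n (int n - j)"
proof (cases "0 \<le> j \<and> j \<le> int n")
  case True
  then have "nat (int n - j) = n - nat j" by auto
  moreover have "nat j \<le> n" using True by auto
  ultimately show ?thesis using True by (simp add: binom_int_def binomial_symmetric[of "nat j" n])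
qed (auto simp: binom_int_def)

lemma sum_delta_binom:
  fixes S :: int
  shows "(\<Sum>j\<le>a+b. of_nat ((a+b) choose j) * (if int j - int b + S = 0 then 1 else 0)) = (of_int (binom_int (a+b) (int a + S)) :: complex)"
proof -
  have "binom_int (a+b) (int a + S) = binom_int (a+b) (int b - S)"
    by (subst binom_int_sym) (simp add: algebra_simps)
  moreover have "(\<Sum>j\<le>a+b. of_nat ((a+b) choose j) * (if int j - int b + S = 0 then 1 else 0)) = (of_int (binom_int (a+b) (int b - S)) :: complex)"
  proof (cases "0 \<le> int b - S \<and> int b - S \<le> int (a+b)")
    case True
    define j0 where "j0 = nat (int b - S)"
    have j0: "j0 \<in> {..a+b}" using True by (auto simp: j0_def)
    have "(\<Sum>j\<le>a+b. (of_nat ((a+b) choose j) :: complex) * (if int j - int b + S = 0 then 1 else 0)) =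
          (\<Sum>j\<le>a+b. if j = j0 then of_nat ((a+b) choose j) else 0)"
      by (rule sum.cong[OF refl]) (use True in \<open>auto simp: j0_def\<close>)
    also have "\<dots> = of_nat ((a+b) choose j0)" using j0 by simp
    finally show ?thesis using True by (simp add: binom_int_def j0_def)
  next
    case False
    have "(\<Sum>j\<le>a+b. (of_nat ((a+b) choose j) :: complex) * (if int j - int b + S = 0 then 1 else 0)) = 0"
      by (rule sum.neutral) (use False in auto)
    moreover have "binom_int (a+b) (int b - S) = 0"
      unfolding binom_int_def using False by (rule if_not_P)
    ultimately show ?thesis by simp
  qed
  ultimately show ?thesis by simp
qed

lemma hh_integral_HK:
  fixes S :: int
  shows "((\<lambda>t. hh a b t * cis (2 * pi * of_int S * t)) has_integral of_int (binom_int (a+b) (int a + S))) {-1/2..1/2}"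
proof -
  have "((\<lambda>t. \<Sum>j\<le>a+b. of_nat ((a+b) choose j) * cis (2 * pi * of_int (int j - int b + S) * t)) has_integral
        (\<Sum>j\<le>a+b. of_nat ((a+b) choose j) * (if int j - int b + S = 0 then 1 else 0))) {-1/2..1/2}"
    by (intro has_integral_sum finite_atMost has_integral_mult_right cis_int_integral_HK)
  then have "((\<lambda>t. \<Sum>j\<le>a+b. of_nat ((a+b) choose j) * cis (2 * pi * of_int (int j - int b + S) * t)) has_integral
        of_int (binom_int (a+b) (int a + S))) {-1/2..1/2}"
    by (simp only: sum_delta_binom)
  then show ?thesis
  proof (rule has_integral_eq[rotated])
    fix t :: real assume t: "t \<in> {-1/2..1/2}"
    have "hh a b t * cis (2 * pi * of_int S * t) = (\<Sum>j\<le>a+b. of_nat ((a+b) choose j) * (cis (2 * pi * of_int (int j - int b) * t) * cis (2 * pi * of_int S * t)))"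
      unfolding hh_def h_expand[OF t] by (simp add: sum_distrib_right mult.assoc)
    also have "\<dots> = (\<Sum>j\<le>a+b. of_nat ((a+b) choose j) * cis (2 * pi * of_int (int j - int b + S) * t))"
      by (simp add: cis_mult algebra_simps)
    finally show "(\<Sum>j\<le>a+b. of_nat ((a+b) choose j) * cis (2 * pi * of_int (int j - int b + S) * t)) = hh a b t * cis (2 * pi * of_int S * t)" by simp
  qed
qed

lemma hh_cont: "continuous_on A (\<lambda>t. hh a b t * cis (2 * pi * of_int S * t))"
  unfolding hh_def by (intro continuous_intros)

lemma hh_integrable: "integrable lborel (\<lambda>t. indicator {-1/2..1/2::real} t *\<^sub>R (hh a b t * cis (2 * pi * of_int S * t)))"
  by (rule borel_integrable_compact) (auto intro: hh_cont)

lemma hh_integral: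
  "(\<integral>t. indicator {-1/2..1/2::real} t *\<^sub>R (hh a b t * cis (2 * pi * of_int S * t)) \<partial>lborel) = of_int (binom_int (a+b) (int a + S))"
proof -
  have "set_integrable lborel {-1/2..1/2::real} (\<lambda>t. hh a b t * cis (2 * pi * of_int S * t))"
    unfolding set_integrable_def by (rule hh_integrable)
  from set_borel_integral_eq_integral(2)[OF this] show ?thesis
    unfolding set_lebesgue_integral_def using hh_integral_HK[of a b S] by (simp add: integral_unique)
qed

lemma cis_sum: "finite A \<Longrightarrow> (\<Prod>x\<in>A. cis (f x)) = cis (\<Sum>x\<in>A. f x)"
  by (induction A rule: finite_induct) (auto simp: cis_mult)

lemma prod_neg1_abs:
  fixes f :: "'a \<Rightarrow> int"
  shows "finite A \<Longrightarrow> (\<Prod>x\<in>A. (-1::int) ^ nat \<bar>f x\<bar>) = (-1) ^ nat \<bar>\<Sum>x\<in>A. f x\<bar>"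
proof (induction A rule: finite_induct)
  case (insert x A)
  then show ?case by (auto simp: neg1_pow_abs)
qed simp

lemma finite_pairs: "finite (pairs N)"
  by (rule finite_subset[of _ "{..<N} \<times> {..<N}"]) (auto simp: pairs_def)

lemma pairs_sum_identity:
  fixes x :: "nat \<Rightarrow> real"
  shows "(\<Sum>p\<in>pairs N. of_int (I p) * (x (fst p) - x (snd p))) =
         (\<Sum>l<N. of_int (\<Sum>m \<in> {..<N} - {l}. Iext I l m) * x l)"
proof -
  define D where "D = {(l, m). l < N \<and> m < N \<and> l \<noteq> m}"
  define g where "g l m = of_int (Iext I l m) * x l" for l m
  have "(\<Sum>l<N. of_int (\<Sum>m \<in> {..<N} - {l}. Iext I l m) * x l) = (\<Sum>l<N. \<Sum>m \<in> {..<N} - {l}. g l m)"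
    by (simp add: g_def sum_distrib_right)
  also have "\<dots> = (\<Sum>(l,m)\<in>Sigma {..<N} (\<lambda>l. {..<N} - {l}). g l m)"
    by (rule sum.Sigma) auto
  also have "Sigma {..<N} (\<lambda>l. {..<N} - {l}) = pairs N \<union> prod.swap ` pairs N"
    by (auto simp: pairs_def image_iff)
  also have "(\<Sum>(l,m)\<in>pairs N \<union> prod.swap ` pairs N. g l m) = (\<Sum>(l,m)\<in>pairs N. g l m) + (\<Sum>(l,m)\<in>prod.swap ` pairs N. g l m)"
    by (rule sum.union_disjoint) (use finite_pairs in \<open>auto simp: pairs_def\<close>)
  also have "(\<Sum>(l,m)\<in>prod.swap ` pairs N. g l m) = (\<Sum>p\<in>pairs N. g (snd p) (fst p))"
    by (subst sum.reindex) (auto simp: case_prod_unfold)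
  also have "(\<Sum>(l,m)\<in>pairs N. g l m) + (\<Sum>p\<in>pairs N. g (snd p) (fst p)) = (\<Sum>p\<in>pairs N. of_int (I p) * (x (fst p) - x (snd p)))"
    unfolding sum.distrib[symmetric] case_prod_unfold
    by (rule sum.cong[OF refl]) (auto simp: g_def Iext_def pairs_def algebra_simps)
  finally show ?thesis ..
qed

theorem proposition4:
  fixes a b lam N :: nat
  shows "M N a b lam =
    of_int (\<Sum>I \<in> PiE (pairs N) (\<lambda>_. {- int lam .. int lam}).
       (-1) ^ nat \<bar>\<Sum>p\<in>pairs N. I p\<bar> *
       (\<Prod>p\<in>pairs N. binom_int (2 * lam) (int lam + I p)) *
       (\<Prod>k<N. binom_int (a + b) (int a + (\<Sum>l \<in> {..<N} - {k}. Iext I k l))))"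
proof -
  define B1 where "B1 = {-1/2..1/2::real}"
  define J where "J = PiE (pairs N) (\<lambda>_. {- int lam .. int lam})"
  define Sx where "Sx I l = (\<Sum>m \<in> {..<N} - {l}. Iext I l m)" for I l
  define c where "c i = (-1::int) ^ nat \<bar>i\<bar> * binom_int (2*lam) (int lam + i)" for i
  define cf where "cf I = (\<Prod>p\<in>pairs N. c (I p))" for I
  define G where "G I l t = indicator B1 t *\<^sub>R (hh a b t * cis (2 * pi * of_int (Sx I l) * t))" for I l t
  have finJ: "finite J" by (simp add: J_def finite_pairs finite_PiE)
  have pw: "indicator (PiE {..<N} (\<lambda>_. {-1/2..1/2::real})) \<theta> *\<^sub>R
        ((\<Prod>l<N. cis (pi * \<theta> l * (real a - real b)) *
            of_real (cmod (1 + cis (2 * pi * \<theta> l)) ^ (a + b))) *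
         (\<Prod>(k, l)\<in>pairs N.
            of_real (cmod (cis (2 * pi * \<theta> k) - cis (2 * pi * \<theta> l)) ^ (2 * lam))))
      = (\<Sum>I\<in>J. of_int (cf I) * (\<Prod>l<N. G I l (\<theta> l)))"
    if th: "\<theta> \<in> space (PiM {..<N} (\<lambda>_. lborel))" for \<theta>
  proof (cases "\<theta> \<in> PiE {..<N} (\<lambda>_. B1)")
    case True
    then have inB: "\<theta> l \<in> B1" if "l < N" for l using that by auto
    have "(\<Prod>(k, l)\<in>pairs N. complex_of_real (cmod (cis (2 * pi * \<theta> k) - cis (2 * pi * \<theta> l)) ^ (2 * lam)))
       = (\<Prod>p\<in>pairs N. \<Sum>i\<in>{- int lam .. int lam}. of_int (c i) * cis (of_int i * (2 * pi * \<theta> (fst p) - 2 * pi * \<theta> (snd p))))"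
      by (simp only: case_prod_unfold pair_expand c_def)
    also have "\<dots> = (\<Sum>I\<in>J. \<Prod>p\<in>pairs N. of_int (c (I p)) * cis (of_int (I p) * (2 * pi * \<theta> (fst p) - 2 * pi * \<theta> (snd p))))"
      unfolding J_def by (rule prod_sum_PiE) (auto simp: finite_pairs)
    also have "\<dots> = (\<Sum>I\<in>J. of_int (cf I) * cis (\<Sum>l<N. 2 * pi * of_int (Sx I l) * \<theta> l))"
    proof (rule sum.cong[OF refl])
      fix I
      have "(\<Prod>p\<in>pairs N. of_int (c (I p)) * cis (of_int (I p) * (2 * pi * \<theta> (fst p) - 2 * pi * \<theta> (snd p))))
          = of_int (cf I) * cis (\<Sum>p\<in>pairs N. of_int (I p) * (2 * pi * \<theta> (fst p) - 2 * pi * \<theta> (snd p)))"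
        by (simp add: prod.distrib cf_def cis_sum finite_pairs)
      also have "(\<Sum>p\<in>pairs N. of_int (I p) * (2 * pi * \<theta> (fst p) - 2 * pi * \<theta> (snd p)))
          = (\<Sum>l<N. of_int (Sx I l) * (2 * pi * \<theta> l))"
        unfolding Sx_def by (rule pairs_sum_identity)
      also have "\<dots> = (\<Sum>l<N. 2 * pi * of_int (Sx I l) * \<theta> l)"
        by (simp add: algebra_simps)
      finally show "(\<Prod>p\<in>pairs N. of_int (c (I p)) * cis (of_int (I p) * (2 * pi * \<theta> (fst p) - 2 * pi * \<theta> (snd p))))
          = of_int (cf I) * cis (\<Sum>l<N. 2 * pi * of_int (Sx I l) * \<theta> l)" .
    qed
    finally have E: "(\<Prod>(k, l)\<in>pairs N. complex_of_real (cmod (cis (2 * pi * \<theta> k) - cis (2 * pi * \<theta> l)) ^ (2 * lam)))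
       = (\<Sum>I\<in>J. of_int (cf I) * cis (\<Sum>l<N. 2 * pi * of_int (Sx I l) * \<theta> l))" .
    have G: "(\<Prod>l<N. G I l (\<theta> l)) = (\<Prod>l<N. hh a b (\<theta> l)) * cis (\<Sum>l<N. 2 * pi * of_int (Sx I l) * \<theta> l)" for I
    proof -
      have "(\<Prod>l<N. G I l (\<theta> l)) = (\<Prod>l<N. hh a b (\<theta> l) * cis (2 * pi * of_int (Sx I l) * \<theta> l))"
        by (rule prod.cong[OF refl]) (simp add: G_def inB)
      then show ?thesis by (simp add: prod.distrib cis_sum)
    qed
    show ?thesis
      using True unfolding E G B1_def
      by (simp add: hh_def sum_distrib_right ac_simps)
  next
    case False
    from th have "\<theta> \<in> PiE {..<N} (\<lambda>_. UNIV)" by (simp add: space_PiM)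
    with False obtain l0 where l0: "l0 < N" "\<theta> l0 \<notin> B1" by (auto simp: PiE_def Pi_def)
    have z: "(\<Prod>l<N. G I l (\<theta> l)) = 0" for I
      by (rule prod_zero) (use l0 in \<open>auto simp: G_def indicator_def\<close>)
    show ?thesis using False by (simp add: B1_def z del: prod_zero_iff)
  qed
  interpret ps: product_sigma_finite "\<lambda>_::nat. lborel :: real measure"
    by (simp add: product_sigma_finite_def lborel.sigma_finite_measure_axioms)
  have intG: "integrable lborel (G I l)" for I l
    unfolding G_def B1_def by (rule hh_integrable)
  have GI: "integral\<^sup>L lborel (G I l) = of_int (binom_int (a+b) (int a + Sx I l))" for I l
    using hh_integral[of a b "Sx I l"] by (simp add: G_def[abs_def] B1_def)
  have "M N a b lam = (\<integral>\<theta>. (\<Sum>I\<in>J. of_int (cf I) * (\<Prod>l<N. G I l (\<theta> l))) \<partial>(PiM {..<N} (\<lambda>_. lborel)))"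
    unfolding M_def by (rule Bochner_Integration.integral_cong[OF refl pw])
  also have "\<dots> = (\<Sum>I\<in>J. of_int (cf I) * (\<integral>\<theta>. (\<Prod>l<N. G I l (\<theta> l)) \<partial>(PiM {..<N} (\<lambda>_. lborel))))"
    by (subst Bochner_Integration.integral_sum) (auto intro!: integrable_mult_right ps.product_integrable_prod intG)
  also have "\<dots> = (\<Sum>I\<in>J. of_int (cf I) * (\<Prod>l<N. of_int (binom_int (a+b) (int a + Sx I l))))"
    by (subst ps.product_integral_prod) (auto intro: intG simp: GI)
  also have "\<dots> = of_int (\<Sum>I\<in>J. cf I * (\<Prod>l<N. binom_int (a+b) (int a + Sx I l)))"
    by simp
  also have "(\<Sum>I\<in>J. cf I * (\<Prod>l<N. binom_int (a+b) (int a + Sx I l))) =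
    (\<Sum>I \<in> PiE (pairs N) (\<lambda>_. {- int lam .. int lam}).
       (-1) ^ nat \<bar>\<Sum>p\<in>pairs N. I p\<bar> *
       (\<Prod>p\<in>pairs N. binom_int (2 * lam) (int lam + I p)) *
       (\<Prod>k<N. binom_int (a + b) (int a + (\<Sum>l \<in> {..<N} - {k}. Iext I k l))))"
    unfolding J_def cf_def c_def Sx_def
    by (simp add: prod.distrib prod_neg1_abs finite_pairs)
  finally show ?thesis .
qed

end
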